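(* Let $m,d\geq 1$ be integers and let $f:[0,4]\to\mathbb{R}$ be continuous on $[0,4]$ and $(2m-1)$ times differentiable on $(0,4)$, with $f^{(2m-1)}$ concave on $(0,4)$. Let $\omega_N=\{\mathbf{x}_1,\ldots,\mathbf{x}_N\}\subset S^d$ be a strongly $m$-sharp configuration. Then the potential $$p_f(\mathbf{x},\omega_N)=\sum_{i=1}^N f(|\mathbf{x}-\mathbf{x}_i|^2),\qquad \mathbf{x}\in S^d,$$ attains its absolute maximum over $S^d$ at every point of $\omega_N$. If moreover $f^{(2m-1)}$ is strictly concave on $(0,4)$, then every point of $S^d$ at which $p_f(\cdot,\omega_N)$ attains its absolute maximum over $S^d$ belongs to $\omega_N$.
   Context: $S^d=\{\mathbf{x}\in\mathbb{R}^{d+1}:|\mathbf{x}|=1\}$, with $|\cdot|$ the Euclidean norm; $\sigma_d$ is the normalized (probability) surface area measure on $S^d$. A finite configuration $\omega_N=\{\mathbf{x}_1,\dots,\mathbf{x}_N\}\subset S^d$ is a spherical $n$-design if $\frac1N\sum_{i=1}^N p(\mathbf{x}_i)=\int_{S^d}p\,d\sigma_d$ for every polynomial $p$ on $\mathbb{R}^{d+1}$ of degree at most $n$. A configuration of $N$ distinct points $\omega_N\subset S^d$ is $m$-sharp if it is a spherical $(2m-1)$-design and exactly $m$ distinct values occur as dot products $\mathbf{x}\cdot\mathbf{y}$ of distinct points $\mathbf{x},\mathbf{y}\in\omega_N$; it is strongly $m$-sharp if it is $m$-sharp and is also a spherical $2m$-design. *)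

theory Defs
  imports "HOL-Analysis.Analysis"
begin

text \<open>Points of R^(d+1) are vectors of type real^'n with CARD('n) = d + 1.\<close>

definition poly_deg_le :: "nat \<Rightarrow> (real^'n \<Rightarrow> real) \<Rightarrow> bool" where
  "poly_deg_le n p \<longleftrightarrow>
     (\<exists>A :: ('n \<Rightarrow> nat) set. \<exists>c :: ('n \<Rightarrow> nat) \<Rightarrow> real.
        finite A \<and> (\<forall>\<alpha>\<in>A. (\<Sum>i\<in>UNIV. \<alpha> i) \<le> n) \<and>
        (\<forall>x. p x = (\<Sum>\<alpha>\<in>A. c \<alpha> * (\<Prod>i\<in>UNIV. (x $ i) ^ (\<alpha> i)))))"

text \<open>Integral against the normalized surface measure sigma_d on the unit sphere,
  realised as the normalized cone measure: integrate g(x/|x|) over the unit ball and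
  divide by the volume of the ball.\<close>
definition sphere_mean :: "(real^'n \<Rightarrow> real) \<Rightarrow> real" where
  "sphere_mean g = integral (ball 0 1) (\<lambda>x. g (x /\<^sub>R norm x)) / measure lebesgue (ball (0::real^'n) 1)"

definition spherical_design :: "nat \<Rightarrow> (real^'n) set \<Rightarrow> bool" where
  "spherical_design n \<omega> \<longleftrightarrow>
     finite \<omega> \<and> \<omega> \<noteq> {} \<and> \<omega> \<subseteq> sphere 0 1 \<and>
     (\<forall>p. poly_deg_le n p \<longrightarrow> (\<Sum>x\<in>\<omega>. p x) / real (card \<omega>) = sphere_mean p)"

definition sharp :: "nat \<Rightarrow> (real^'n) set \<Rightarrow> bool" where
  "sharp m \<omega> \<longleftrightarrow> spherical_design (2*m - 1) \<omega> \<and>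
     card {x \<bullet> y | x y. x \<in> \<omega> \<and> y \<in> \<omega> \<and> x \<noteq> y} = m"

definition strongly_sharp :: "nat \<Rightarrow> (real^'n) set \<Rightarrow> bool" where
  "strongly_sharp m \<omega> \<longleftrightarrow> sharp m \<omega> \<and> spherical_design (2*m) \<omega>"

definition strictly_concave_on :: "real set \<Rightarrow> (real \<Rightarrow> real) \<Rightarrow> bool" where
  "strictly_concave_on S g \<longleftrightarrow>
     (\<forall>x\<in>S. \<forall>y\<in>S. \<forall>t. x \<noteq> y \<and> 0 < t \<and> t < 1 \<longrightarrow>
        (1 - t) * g x + t * g y < g ((1 - t) * x + t * y))"

definition potential :: "(real \<Rightarrow> real) \<Rightarrow> (real^'n) set \<Rightarrow> real^'n \<Rightarrow> real" where
  "potential f \<omega> x = (\<Sum>y\<in>\<omega>. f ((norm (x - y))\<^sup>2))"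

end

theory Submission
  imports Defs
begin



typedef ('n::finite) wo = "UNIV :: 'n set" by auto

instance wo :: (finite) finite
  by standard (subst type_definition.univ[OF type_definition_wo], simp)

instantiation wo :: (finite) linorder
begin
definition less_eq_wo :: "'a wo \<Rightarrow> 'a wo \<Rightarrow> bool" where
  "less_eq_wo x y \<longleftrightarrow> to_nat (Rep_wo x) \<le> to_nat (Rep_wo y)"
definition less_wo :: "'a wo \<Rightarrow> 'a wo \<Rightarrow> bool" where
  "less_wo x y \<longleftrightarrow> to_nat (Rep_wo x) < to_nat (Rep_wo y)"
instance
proof
  have inj: "inj (\<lambda>x::'a wo. to_nat (Rep_wo x))"
    by (meson Rep_wo_inject injI inj_to_nat injD)
  fix x y z :: "'a wo"
  show "(x < y) = (x \<le> y \<and> \<not> y \<le> x)" by (auto simp: less_eq_wo_def less_wo_def)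
  show "x \<le> x" by (auto simp: less_eq_wo_def)
  show "x \<le> y \<Longrightarrow> y \<le> z \<Longrightarrow> x \<le> z" by (auto simp: less_eq_wo_def)
  show "x \<le> y \<Longrightarrow> y \<le> x \<Longrightarrow> x = y"
    unfolding less_eq_wo_def using injD[OF inj, of x y] by linarith
  show "x \<le> y \<or> y \<le> x" unfolding less_eq_wo_def by linarith
qed
end

instance wo :: (finite) wellorder
proof
  fix P :: "'a wo \<Rightarrow> bool" and a :: "'a wo"
  assume H: "\<And>x. (\<And>y. y < x \<Longrightarrow> P y) \<Longrightarrow> P x"
  have "\<forall>x. to_nat (Rep_wo x) = n \<longrightarrow> P x" for n
  proof (induction n rule: less_induct)
    case (less n)
    then show ?case using H by (auto simp: less_wo_def)
  qed
  then show "P a" by blast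
qed




definition relab :: "('a::finite \<Rightarrow> 'b::finite) \<Rightarrow> real^'b \<Rightarrow> real^'a" where
  "relab \<sigma> x = (\<chi> j. x $ \<sigma> j)"

lemma relab_nth [simp]: "relab \<sigma> x $ j = x $ \<sigma> j"
  by (simp add: relab_def)

lemma relab_relab: "relab \<sigma> (relab \<tau> x) = relab (\<tau> \<circ> \<sigma>) x"
  by (simp add: vec_eq_iff)

lemma relab_inv1: "bij \<sigma> \<Longrightarrow> relab (inv \<sigma>) (relab \<sigma> x) = x"
  by (simp add: vec_eq_iff bij_def surj_f_inv_f)

lemma relab_inv2: "bij \<sigma> \<Longrightarrow> relab \<sigma> (relab (inv \<sigma>) x) = x"
  by (simp add: vec_eq_iff bij_def inv_f_f)

lemma sum_relab: "bij \<sigma> \<Longrightarrow> (\<Sum>j\<in>UNIV. g (\<sigma> j)) = (\<Sum>i\<in>UNIV. (g i::real))"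
  using sum.reindex_bij_betw[of \<sigma> UNIV UNIV g] by (simp add: bij_betw_def bij_def)

lemma prod_relab: "bij \<sigma> \<Longrightarrow> (\<Prod>j\<in>UNIV. g (\<sigma> j)) = (\<Prod>i\<in>UNIV. (g i::real))"
  using prod.reindex_bij_betw[of \<sigma> UNIV UNIV g] by (simp add: bij_betw_def bij_def)

lemma inner_relab: "bij \<sigma> \<Longrightarrow> relab \<sigma> x \<bullet> relab \<sigma> y = x \<bullet> y"
  unfolding inner_vec_def using sum_relab[of \<sigma> "\<lambda>i. x $ i \<bullet> y $ i"] by simp

lemma norm_relab: "bij \<sigma> \<Longrightarrow> norm (relab \<sigma> x) = norm x"
  by (metis inner_relab norm_eq_sqrt_inner)

lemma linear_relab: "linear (relab \<sigma>)"
  by (rule linearI) (simp_all add: vec_eq_iff)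

lemma relab_cbox: "bij \<sigma> \<Longrightarrow> relab \<sigma> ` cbox u v = cbox (relab \<sigma> u) (relab \<sigma> v)"
proof (intro equalityI subsetI)
  fix y assume "bij \<sigma>" "y \<in> relab \<sigma> ` cbox u v"
  then show "y \<in> cbox (relab \<sigma> u) (relab \<sigma> v)" by (auto simp: mem_box_cart)
next
  fix y assume b: "bij \<sigma>" and y: "y \<in> cbox (relab \<sigma> u) (relab \<sigma> v)"
  have "relab (inv \<sigma>) y \<in> cbox u v"
  proof -
    have "u $ i \<le> y $ inv \<sigma> i \<and> y $ inv \<sigma> i \<le> v $ i" for i
      using y b unfolding mem_box_cart by (metis bij_def relab_nth surj_f_inv_f)
    then show ?thesis by (simp add: mem_box_cart)
  qed
  then show "y \<in> relab \<sigma> ` cbox u v" using relab_inv2[OF b, of y] by (metis image_eqI)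
qed

lemma relab_cbox_empty: "bij \<sigma> \<Longrightarrow> (cbox (relab \<sigma> u) (relab \<sigma> v) = {}) = (cbox u v = {})"
  by (metis image_is_empty relab_cbox)

lemma content_relab: "bij \<sigma> \<Longrightarrow> Henstock_Kurzweil_Integration.content (cbox (relab \<sigma> u) (relab \<sigma> v)) = Henstock_Kurzweil_Integration.content (cbox u v)"
  unfolding content_cbox_if_cart using relab_cbox_empty[of \<sigma> u v] prod_relab[of \<sigma> "\<lambda>i. v $ i - u $ i"]
  by simp

lemma relab_has_integral_ball:
  fixes H :: "real^'a::finite \<Rightarrow> real" and \<sigma> :: "'a \<Rightarrow> 'b::finite"
  assumes b: "bij \<sigma>" and H: "(H has_integral I) (ball 0 1)"
  shows "((\<lambda>y. H (relab \<sigma> y)) has_integral I) (ball 0 1)"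
proof -
  define F where "F x = (if x \<in> ball 0 1 then H x else 0)" for x
  define a :: "real^'a" where "a = (\<chi> i. -1)"
  define c :: "real^'a" where "c = (\<chi> i. 1)"
  have sub: "ball (0::real^'k::finite) 1 \<subseteq> cbox (\<chi> i. -1) (\<chi> i. 1)"
  proof
    fix x :: "real^'k" assume "x \<in> ball 0 1"
    then have "norm x < 1" by simp
    have "-1 \<le> x $ i \<and> x $ i \<le> 1" for i
      using component_le_norm_cart[of x i] \<open>norm x < 1\<close> by (smt (verit))
    then show "x \<in> cbox (\<chi> i. -1) (\<chi> i. 1)" by (simp add: mem_box_cart)
  qed
  have "(F has_integral I) (cbox a c)"
    unfolding F_def a_def c_def using has_integral_restrict[OF sub] H by blast
  then have "((\<lambda>x. F (relab \<sigma> x)) has_integral (1/1) *\<^sub>R I) (relab (inv \<sigma>) ` cbox a c)"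
  proof (rule has_integral_twiddle[where h = "relab (inv \<sigma>)", rotated 7])
    show "0 < (1::real)" by simp
    show "relab (inv \<sigma>) (relab \<sigma> x) = x" for x by (rule relab_inv1[OF b])
    show "relab \<sigma> (relab (inv \<sigma>) x) = x" for x by (rule relab_inv2[OF b])
    show "isCont (relab \<sigma>) x" for x
      using linear_relab linear_conv_bounded_linear linear_continuous_at by blast
    show "\<exists>w z. relab \<sigma> ` cbox u v = cbox w z" for u v using relab_cbox[OF b] by blast
    show "\<exists>w z. relab (inv \<sigma>) ` cbox u v = cbox w z" for u v using relab_cbox[OF bij_imp_bij_inv[OF b]] by blast
    show "Henstock_Kurzweil_Integration.content (relab \<sigma> ` cbox u v) = 1 * Henstock_Kurzweil_Integration.content (cbox u v)" for u v
      using relab_cbox[OF b] content_relab[OF b] by simp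
  qed
  moreover have "relab (inv \<sigma>) ` cbox a c = cbox (\<chi> i. -1) (\<chi> i. 1)"
  proof -
    have "relab (inv \<sigma>) a = (\<chi> i. -1)" "relab (inv \<sigma>) c = (\<chi> i. 1)"
      unfolding a_def c_def by (simp_all add: vec_eq_iff)
    then show ?thesis using relab_cbox[OF bij_imp_bij_inv[OF b]] by simp
  qed
  moreover have "F (relab \<sigma> x) = (if x \<in> ball 0 1 then H (relab \<sigma> x) else 0)" for x
    using norm_relab[OF b] by (simp add: F_def)
  ultimately have "((\<lambda>x. if x \<in> ball 0 1 then H (relab \<sigma> x) else 0) has_integral I) (cbox (\<chi> i. -1) (\<chi> i. 1))"
    by simp
  then show ?thesis using has_integral_restrict[OF sub] by blast
qed

lemma relab_integral_ball:
  fixes H :: "real^'a::finite \<Rightarrow> real" and \<sigma> :: "'a \<Rightarrow> 'b::finite"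
  assumes b: "bij \<sigma>"
  shows "integral (ball 0 1) (\<lambda>y. H (relab \<sigma> y)) = integral (ball 0 1) H"
proof (cases "H integrable_on ball 0 1")
  case True
  then have "(H has_integral integral (ball 0 1) H) (ball 0 1)" by (rule integrable_integral)
  from relab_has_integral_ball[OF b this] show ?thesis by (rule integral_unique)
next
  case False
  have "\<not> (\<lambda>y. H (relab \<sigma> y)) integrable_on ball 0 1"
  proof
    assume "(\<lambda>y. H (relab \<sigma> y)) integrable_on ball 0 1"
    then obtain J where "((\<lambda>y. H (relab \<sigma> y)) has_integral J) (ball 0 1)"
      by (auto simp: integrable_on_def)
    from relab_has_integral_ball[OF bij_imp_bij_inv[OF b] this]
    have "(H has_integral J) (ball 0 1)" by (simp add: relab_inv2[OF b])
    then show False using False by (auto simp: integrable_on_def)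
  qed
  then show ?thesis using False by (simp add: not_integrable_integral)
qed




lemma relab_id [simp]: "relab id x = x" by (simp add: vec_eq_iff)

lemma absint_sphere_fun:
  fixes y :: "real^'n::finite"
  assumes y: "norm y = 1" and G: "continuous_on UNIV (G :: real \<Rightarrow> real)"
  shows "(\<lambda>z. G (y \<bullet> (z /\<^sub>R norm z))) absolutely_integrable_on ball 0 1"
proof -
  have "compact (G ` {-1..1})" by (rule compact_continuous_image) (use G continuous_on_subset in auto)
  then obtain M where M: "\<And>t. t \<in> {-1..1} \<Longrightarrow> norm (G t) \<le> M"
    using compact_imp_bounded bounded_iff by (metis imageI)
  have bnd: "norm (G (y \<bullet> (z /\<^sub>R norm z))) \<le> M" for z
  proof -
    have "norm (z /\<^sub>R norm z) \<le> 1" by (cases "z = 0") auto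
    then have "\<bar>y \<bullet> (z /\<^sub>R norm z)\<bar> \<le> 1"
      using Cauchy_Schwarz_ineq2[of y "z /\<^sub>R norm z"] y by simp
    then show ?thesis using M by (simp add: abs_le_iff)
  qed
  have meas: "(\<lambda>z. G (y \<bullet> (z /\<^sub>R norm z))) \<in> borel_measurable borel"
  proof (rule measurable_compose[where f = "\<lambda>z. y \<bullet> (z /\<^sub>R norm z)"])
    show "(\<lambda>z. y \<bullet> (z /\<^sub>R norm z)) \<in> borel_measurable borel" by measurable
    show "G \<in> borel_measurable borel" using G by (rule borel_measurable_continuous_onI)
  qed
  have meas2: "(\<lambda>z. G (y \<bullet> (z /\<^sub>R norm z))) \<in> borel_measurable (lebesgue_on (ball 0 1))"
    by (intro measurable_restrict_space1 measurable_completion) (use meas in simp)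
  show ?thesis
    by (rule measurable_bounded_by_integrable_imp_absolutely_integrable[OF meas2, where g = "\<lambda>_. M"])
       (use bnd in \<open>auto intro: integrable_on_const\<close>)
qed

lemma rot_wo:
  fixes y1 y2 :: "real^'m::{finite,wellorder}"
  assumes y1: "norm y1 = 1" and y2: "norm y2 = 1" and G: "continuous_on UNIV (G :: real \<Rightarrow> real)"
  shows "integral (ball 0 1) (\<lambda>z. G (y1 \<bullet> (z /\<^sub>R norm z))) =
         integral (ball 0 1) (\<lambda>z. G (y2 \<bullet> (z /\<^sub>R norm z)))"
proof (cases "y1 = y2")
  case True then show ?thesis by simp
next
  case False
  define v where "v = y1 - y2"
  have vv: "v \<bullet> v \<noteq> 0" using False by (simp add: v_def)
  define T where "T z = z - (2 * (z \<bullet> v) / (v \<bullet> v)) *\<^sub>R v" for z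
  have linT: "linear T" unfolding T_def
    by (rule linearI) (simp_all add: inner_add_left algebra_simps add_divide_distrib scaleR_add_left diff_divide_distrib)
  have TT: "T (T z) = z" for z
    using vv by (simp add: T_def inner_diff_left algebra_simps)
  have Tsym: "T z \<bullet> w = z \<bullet> T w" for z w
    by (simp add: T_def inner_diff_left inner_diff_right algebra_simps inner_commute)
  have Tn: "norm (T z) = norm z" for z
  proof -
    have "T z \<bullet> T z = z \<bullet> z" using Tsym[of z "T z"] TT[of z] by simp
    then show ?thesis by (simp add: norm_eq_sqrt_inner)
  qed
  have Ty1: "T y1 = y2"
  proof -
    have n1: "y1 \<bullet> y1 = 1" "y2 \<bullet> y2 = 1" using y1 y2 by (simp_all add: power2_norm_eq_inner[symmetric])
    have "y1 \<bullet> v = 1 - y1 \<bullet> y2" "v \<bullet> v = 2 - 2 * (y1 \<bullet> y2)"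
      using n1 by (simp_all add: v_def inner_diff_left inner_diff_right inner_commute)
    then have "v \<bullet> v = 2 * (y1 \<bullet> v)" by simp
    then have "2 * (y1 \<bullet> v) / (v \<bullet> v) = 1" using vv by (metis divide_self)
    then have "T y1 = y1 - v" unfolding T_def by (metis scaleR_one)
    then show ?thesis by (simp add: v_def)
  qed
  have orth: "orthogonal_transformation T" using linT Tn by (simp add: orthogonal_transformation)
  have det: "\<bar>det (matrix T)\<bar> = 1" using orth by simp
  define f where "f z = G (y1 \<bullet> (z /\<^sub>R norm z))" for z :: "real^'m::{finite,wellorder}"
  have fT: "f (T z) = G (y2 \<bullet> (z /\<^sub>R norm z))" for z
  proof -
    have "y1 \<bullet> (T z /\<^sub>R norm (T z)) = (y1 \<bullet> T z) / norm z" by (simp add: Tn divide_inverse_commute)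
    also have "\<dots> = (T y1 \<bullet> z) / norm z" by (simp add: Tsym)
    also have "\<dots> = y2 \<bullet> (z /\<^sub>R norm z)" by (simp add: Ty1 divide_inverse_commute)
    finally show ?thesis by (simp add: f_def)
  qed
  have ai: "f absolutely_integrable_on ball 0 1" unfolding f_def by (rule absint_sphere_fun[OF y1 G])
  have "(\<lambda>x. \<bar>det (matrix T)\<bar> * f (T x)) absolutely_integrable_on ball 0 1 \<and>
        integral (ball 0 1) (\<lambda>x. \<bar>det (matrix T)\<bar> * f (T x)) = integral (ball 0 1) f \<longleftrightarrow>
        f absolutely_integrable_on ball 0 1 \<and> integral (ball 0 1) f = integral (ball 0 1) f"
  proof (rule cov_invertible_real[where h = T and g' = "\<lambda>_. T" and h' = "\<lambda>_. T"])
    show "(T has_derivative T) (at x within ball 0 1)" for x using linT by (rule linear_imp_has_derivative)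
    show "(T has_derivative T) (at x within ball 0 1)" for x using linT by (rule linear_imp_has_derivative)
    show "T x \<in> ball 0 1 \<and> T (T x) = x" if "x \<in> ball 0 1" for x using that by (simp add: Tn TT)
    show "T x \<in> ball 0 1 \<and> T (T x) = x" if "x \<in> ball 0 1" for x using that by (simp add: Tn TT)
    show "T \<circ> T = id" by (simp add: fun_eq_iff TT)
  qed
  then have "integral (ball 0 1) (\<lambda>x. f (T x)) = integral (ball 0 1) f" using ai det by simp
  then have "integral (ball 0 1) (\<lambda>z. G (y2 \<bullet> (z /\<^sub>R norm z))) = integral (ball 0 1) f"
    by (simp only: fT)
  moreover have "f = (\<lambda>z. G (y1 \<bullet> (z /\<^sub>R norm z)))" by (simp add: fun_eq_iff f_def)
  ultimately show ?thesis by simp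
qed

lemma bij_Abs_wo: "bij (Abs_wo :: 'n::finite \<Rightarrow> 'n wo)"
  by (metis Abs_wo_inverse UNIV_I bij_betw_def inj_on_inverseI type_definition.Abs_image type_definition_wo)

lemma rot_general:
  fixes y1 y2 :: "real^'n::finite"
  assumes y1: "norm y1 = 1" and y2: "norm y2 = 1" and G: "continuous_on UNIV (G :: real \<Rightarrow> real)"
  shows "integral (ball 0 1) (\<lambda>z. G (y1 \<bullet> (z /\<^sub>R norm z))) =
         integral (ball 0 1) (\<lambda>z. G (y2 \<bullet> (z /\<^sub>R norm z)))"
proof -
  let ?A = "Abs_wo :: 'n \<Rightarrow> 'n wo"
  let ?R = "Rep_wo :: 'n wo \<Rightarrow> 'n"
  have b: "bij ?A" by (rule bij_Abs_wo)
  have RA: "?R \<circ> ?A = id" by (simp add: fun_eq_iff Abs_wo_inverse)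
  have key: "integral (ball 0 1) (\<lambda>z. G (y \<bullet> (z /\<^sub>R norm z))) =
             integral (ball 0 1) (\<lambda>w. G (relab ?R y \<bullet> (w /\<^sub>R norm w)))" for y :: "real^'n"
  proof -
    have "integral (ball 0 1) (\<lambda>z. G (y \<bullet> (z /\<^sub>R norm z))) =
          integral (ball 0 1) (\<lambda>w. G (y \<bullet> (relab ?A w /\<^sub>R norm (relab ?A w))))"
      by (rule relab_integral_ball[OF b, symmetric])
    moreover have "y \<bullet> (relab ?A w /\<^sub>R norm (relab ?A w)) = relab ?R y \<bullet> (w /\<^sub>R norm w)" for w
    proof -
      have "y \<bullet> relab ?A w = relab ?A (relab ?R y) \<bullet> relab ?A w"
        by (simp add: relab_relab RA vec_eq_iff)
      also have "\<dots> = relab ?R y \<bullet> w" by (rule inner_relab[OF b])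
      finally show ?thesis by (simp add: norm_relab[OF b])
    qed
    ultimately show ?thesis by simp
  qed
  have bR: "bij ?R" using b by (metis bij_betw_def bij_betw_inv_into inv_equality Abs_wo_inverse Rep_wo_inverse UNIV_I)
  have "norm (relab ?R y1) = 1" "norm (relab ?R y2) = 1" using y1 y2 norm_relab[OF bR] by simp_all
  then show ?thesis using key[of y1] key[of y2] rot_wo[OF _ _ G] by simp
qed




definition monom_fn :: "('n::finite \<Rightarrow> nat) \<Rightarrow> real^'n \<Rightarrow> real" where
  "monom_fn \<alpha> x = (\<Prod>i\<in>UNIV. (x $ i) ^ (\<alpha> i))"

lemma pdl_repr:
  fixes \<beta> :: "'j \<Rightarrow> ('n::finite \<Rightarrow> nat)"
  assumes J: "finite J" and deg: "\<forall>j\<in>J. (\<Sum>i\<in>UNIV. \<beta> j i) \<le> n"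
    and p: "\<forall>x. p x = (\<Sum>j\<in>J. d j * monom_fn (\<beta> j) x)"
  shows "poly_deg_le n p"
  unfolding poly_deg_le_def
proof (intro exI conjI)
  show "finite (\<beta> ` J)" using J by simp
  show "\<forall>\<alpha>\<in>\<beta> ` J. (\<Sum>i\<in>UNIV. \<alpha> i) \<le> n" using deg by auto
  show "\<forall>x. p x = (\<Sum>\<alpha>\<in>\<beta> ` J. (\<Sum>j\<in>{j\<in>J. \<beta> j = \<alpha>}. d j) * (\<Prod>i\<in>UNIV. x $ i ^ \<alpha> i))"
  proof
    fix x
    have "(\<Sum>\<alpha>\<in>\<beta> ` J. (\<Sum>j\<in>{j\<in>J. \<beta> j = \<alpha>}. d j) * (\<Prod>i\<in>UNIV. x $ i ^ \<alpha> i))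
        = (\<Sum>\<alpha>\<in>\<beta> ` J. (\<Sum>j\<in>{j\<in>J. \<beta> j = \<alpha>}. d j * monom_fn (\<beta> j) x))"
      by (rule sum.cong) (auto simp: sum_distrib_right monom_fn_def)
    also have "\<dots> = (\<Sum>j\<in>J. d j * monom_fn (\<beta> j) x)"
      by (rule sum.image_gen[symmetric]) (rule J)
    finally show "p x = (\<Sum>\<alpha>\<in>\<beta> ` J. (\<Sum>j\<in>{j\<in>J. \<beta> j = \<alpha>}. d j) * (\<Prod>i\<in>UNIV. x $ i ^ \<alpha> i))"
      using p by simp
  qed
qed

lemma pdl_elim:
  assumes "poly_deg_le n p"
  obtains A c where "finite A" "\<forall>\<alpha>\<in>A. (\<Sum>i\<in>UNIV. \<alpha> i) \<le> n" "\<forall>x. p x = (\<Sum>\<alpha>\<in>A. c \<alpha> * monom_fn \<alpha> x)"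
  using assms unfolding poly_deg_le_def monom_fn_def by blast

lemma pdl_mono: "poly_deg_le n p \<Longrightarrow> n \<le> k \<Longrightarrow> poly_deg_le k p"
  unfolding poly_deg_le_def by (meson order_trans)

lemma pdl_const: "poly_deg_le n (\<lambda>x::real^'n::finite. c)"
proof (rule pdl_repr[where J = "{()}" and \<beta> = "\<lambda>_ _. 0" and d = "\<lambda>_. c"])
  show "\<forall>x. c = (\<Sum>j\<in>{()}. c * monom_fn (\<lambda>_::'n. 0) x)" by (simp add: monom_fn_def)
qed auto

lemma pdl_coord: "poly_deg_le 1 (\<lambda>x::real^'n::finite. x $ k)"
proof (rule pdl_repr[where J = "{()}" and \<beta> = "\<lambda>_ i. if i = k then 1 else 0" and d = "\<lambda>_. 1"])
  have "monom_fn (\<lambda>i. if i = k then 1 else 0) x = x $ k" for x :: "real^'n"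
  proof -
    have "monom_fn (\<lambda>i. if i = k then 1 else 0) x = (\<Prod>i\<in>UNIV. if i = k then x $ i else 1)"
      unfolding monom_fn_def by (rule prod.cong) auto
    also have "\<dots> = x $ k" by (simp add: prod.delta')
    finally show ?thesis .
  qed
  then show "\<forall>x::real^'n. x $ k = (\<Sum>j\<in>{()}. 1 * monom_fn (\<lambda>i. if i = k then 1 else 0) x)" by simp
  show "\<forall>j\<in>{()}. (\<Sum>i\<in>UNIV. if i = k then 1 else 0) \<le> (1::nat)"
    by (simp add: sum.delta')
qed auto

lemma pdl_add:
  assumes "poly_deg_le n p" "poly_deg_le n q"
  shows "poly_deg_le n (\<lambda>x. p x + q x)"
proof -
  obtain A c where A: "finite A" "\<forall>\<alpha>\<in>A. (\<Sum>i\<in>UNIV. \<alpha> i) \<le> n" "\<forall>x. p x = (\<Sum>\<alpha>\<in>A. c \<alpha> * monom_fn \<alpha> x)"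
    using assms(1) by (rule pdl_elim)
  obtain B e where B: "finite B" "\<forall>\<alpha>\<in>B. (\<Sum>i\<in>UNIV. \<alpha> i) \<le> n" "\<forall>x. q x = (\<Sum>\<alpha>\<in>B. e \<alpha> * monom_fn \<alpha> x)"
    using assms(2) by (rule pdl_elim)
  show ?thesis
  proof (rule pdl_repr[where J = "A <+> B" and \<beta> = "case_sum id id" and d = "case_sum c e"])
    show "finite (A <+> B)" using A B by simp
    show "\<forall>j\<in>A <+> B. (\<Sum>i\<in>UNIV. case_sum id id j i) \<le> n" using A B by auto
    show "\<forall>x. p x + q x = (\<Sum>j\<in>A <+> B. case_sum c e j * monom_fn (case_sum id id j) x)"
      using A B by (simp add: sum.Plus o_def)
  qed
qed

lemma pdl_mult:
  assumes "poly_deg_le n p" "poly_deg_le k q"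
  shows "poly_deg_le (n + k) (\<lambda>x. p x * q x)"
proof -
  obtain A c where A: "finite A" "\<forall>\<alpha>\<in>A. (\<Sum>i\<in>UNIV. \<alpha> i) \<le> n" "\<forall>x. p x = (\<Sum>\<alpha>\<in>A. c \<alpha> * monom_fn \<alpha> x)"
    using assms(1) by (rule pdl_elim)
  obtain B e where B: "finite B" "\<forall>\<alpha>\<in>B. (\<Sum>i\<in>UNIV. \<alpha> i) \<le> k" "\<forall>x. q x = (\<Sum>\<alpha>\<in>B. e \<alpha> * monom_fn \<alpha> x)"
    using assms(2) by (rule pdl_elim)
  have mm: "monom_fn (\<lambda>i. a i + b i) x = monom_fn a x * monom_fn b x" for a b and x :: "real^'a"
    by (simp add: monom_fn_def power_add prod.distrib)
  show ?thesis
  proof (rule pdl_repr[where J = "A \<times> B" and \<beta> = "\<lambda>(a,b) i. a i + b i" and d = "\<lambda>(a,b). c a * e b"])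
    show "finite (A \<times> B)" using A B by simp
    show "\<forall>j\<in>A \<times> B. (\<Sum>i\<in>UNIV. (case j of (a, b) \<Rightarrow> \<lambda>i. a i + b i) i) \<le> n + k"
      using A B by (auto simp: sum.distrib add_mono)
    show "\<forall>x. p x * q x = (\<Sum>j\<in>A \<times> B. (case j of (a, b) \<Rightarrow> c a * e b) * monom_fn (case j of (a, b) \<Rightarrow> \<lambda>i. a i + b i) x)"
    proof
      fix x
      have "p x * q x = (\<Sum>a\<in>A. \<Sum>b\<in>B. (c a * monom_fn a x) * (e b * monom_fn b x))"
        using A B by (simp add: sum_product)
      also have "\<dots> = (\<Sum>(a,b)\<in>A \<times> B. (c a * monom_fn a x) * (e b * monom_fn b x))"
        by (rule sum.cartesian_product)
      also have "\<dots> = (\<Sum>j\<in>A \<times> B. (case j of (a, b) \<Rightarrow> c a * e b) * monom_fn (case j of (a, b) \<Rightarrow> \<lambda>i. a i + b i) x)"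
        by (rule sum.cong) (auto simp: mm)
      finally show "p x * q x = (\<Sum>j\<in>A \<times> B. (case j of (a, b) \<Rightarrow> c a * e b) * monom_fn (case j of (a, b) \<Rightarrow> \<lambda>i. a i + b i) x)" .
    qed
  qed
qed

lemma pdl_sum:
  assumes "finite I" "\<And>i. i \<in> I \<Longrightarrow> poly_deg_le n (p i)"
  shows "poly_deg_le n (\<lambda>x. \<Sum>i\<in>I. p i x)"
  using assms
proof (induction I rule: finite_induct)
  case empty then show ?case using pdl_const[of n 0] by simp
next
  case (insert a F) then show ?case by (simp add: pdl_add)
qed

lemma pdl_power:
  assumes "poly_deg_le n p"
  shows "poly_deg_le (k * n) (\<lambda>x. (p x) ^ k)"
proof (induction k)
  case 0 then show ?case using pdl_const[of 0 1] by simp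
next
  case (Suc k)
  have "poly_deg_le (n + k * n) (\<lambda>x. p x * (p x) ^ k)" by (rule pdl_mult[OF assms Suc])
  then show ?case by (simp add: add.commute)
qed

lemma pdl_inner: "poly_deg_le 1 (\<lambda>x::real^'n::finite. c + b * (y \<bullet> x))"
proof -
  have "poly_deg_le (0 + 1) (\<lambda>x::real^'n. (b * y $ i) * x $ i)" for i
    by (rule pdl_mult[OF pdl_const pdl_coord])
  then have "poly_deg_le 1 (\<lambda>x::real^'n. \<Sum>i\<in>UNIV. (b * y $ i) * x $ i)"
    by (intro pdl_sum) auto
  then have "poly_deg_le 1 (\<lambda>x::real^'n. c + (\<Sum>i\<in>UNIV. (b * y $ i) * x $ i))"
    by (intro pdl_add pdl_const)
  moreover have "b * (y \<bullet> x) = (\<Sum>i\<in>UNIV. (b * y $ i) * x $ i)" for x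
    by (simp add: inner_vec_def sum_distrib_left mult.assoc)
  ultimately show ?thesis by simp
qed

lemma pdl_poly:
  assumes "poly_deg_le 1 e"
  shows "poly_deg_le (degree q) (\<lambda>x. poly q (e x))"
proof -
  have "poly_deg_le (degree q) (\<lambda>x. \<Sum>i\<le>degree q. coeff q i * (e x) ^ i)"
  proof (rule pdl_sum)
    fix i assume "i \<in> {..degree q}"
    then have "poly_deg_le (0 + i * 1) (\<lambda>x. coeff q i * (e x) ^ i)"
      by (intro pdl_mult pdl_const pdl_power assms)
    then show "poly_deg_le (degree q) (\<lambda>x. coeff q i * (e x) ^ i)"
      by (rule pdl_mono) (use \<open>i \<in> _\<close> in auto)
  qed auto
  then show ?thesis by (simp add: poly_altdef)
qed

lemma design_zonal:
  fixes \<omega> :: "(real^'n::finite) set"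
  assumes D: "spherical_design n \<omega>" and q: "degree q \<le> n"
    and y1: "norm y1 = 1" and y2: "norm y2 = 1"
  shows "(\<Sum>x\<in>\<omega>. poly q (2 - 2 * (y1 \<bullet> x))) = (\<Sum>x\<in>\<omega>. poly q (2 - 2 * (y2 \<bullet> x)))"
proof -
  have fin: "finite \<omega>" "\<omega> \<noteq> {}" using D by (auto simp: spherical_design_def)
  have cont: "continuous_on UNIV (\<lambda>t. poly q (2 - 2 * t))"
    by (intro continuous_intros)
  have mean: "(\<Sum>x\<in>\<omega>. poly q (2 - 2 * (y \<bullet> x))) / real (card \<omega>) =
     integral (ball 0 1) (\<lambda>z. poly q (2 - 2 * (y \<bullet> (z /\<^sub>R norm z)))) / measure lebesgue (ball (0::real^'n) 1)"
    for y :: "real^'n"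
  proof -
    have "poly_deg_le (degree q) (\<lambda>x. poly q (2 + (-2) * (y \<bullet> x)))"
      by (rule pdl_poly[OF pdl_inner])
    then have "poly_deg_le n (\<lambda>x. poly q (2 - 2 * (y \<bullet> x)))"
      using pdl_mono q by simp
    then show ?thesis using D unfolding spherical_design_def sphere_mean_def by blast
  qed
  have "integral (ball 0 1) (\<lambda>z. poly q (2 - 2 * (y1 \<bullet> (z /\<^sub>R norm z)))) =
        integral (ball 0 1) (\<lambda>z. poly q (2 - 2 * (y2 \<bullet> (z /\<^sub>R norm z))))"
    using rot_general[OF y1 y2 cont] by simp
  then have "(\<Sum>x\<in>\<omega>. poly q (2 - 2 * (y1 \<bullet> x))) / real (card \<omega>) = (\<Sum>x\<in>\<omega>. poly q (2 - 2 * (y2 \<bullet> x))) / real (card \<omega>)"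
    using mean[of y1] mean[of y2] by simp
  moreover have "real (card \<omega>) \<noteq> 0" using fin by simp
  ultimately show ?thesis by simp
qed




definition NP :: "real set \<Rightarrow> real set \<Rightarrow> real poly" where
  "NP S D = (\<Prod>s\<in>S. [:-s, 1:]) * (\<Prod>d\<in>D. [:-d, 1:] ^ 2)"

definition herm :: "(real \<Rightarrow> real) \<Rightarrow> (real \<Rightarrow> real) \<Rightarrow> real set \<Rightarrow> real set \<Rightarrow> real poly \<Rightarrow> bool" where
  "herm F F' S D H \<longleftrightarrow> (\<forall>z\<in>S \<union> D. poly H z = F z) \<and> (\<forall>d\<in>D. poly (pderiv H) d = F' d)"

lemma poly_NP: "finite S \<Longrightarrow> finite D \<Longrightarrow> poly (NP S D) x = (\<Prod>s\<in>S. x - s) * (\<Prod>d\<in>D. (x - d) ^ 2)"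
  by (simp add: NP_def poly_prod)

lemma poly_NP_zero: "finite S \<Longrightarrow> finite D \<Longrightarrow> z \<in> S \<union> D \<Longrightarrow> poly (NP S D) z = 0"
  by (auto simp: poly_NP prod_zero_iff)

lemma poly_NP_nonzero: "finite S \<Longrightarrow> finite D \<Longrightarrow> z \<notin> S \<union> D \<Longrightarrow> poly (NP S D) z \<noteq> 0"
  by (auto simp: poly_NP prod_zero_iff)

lemma degree_NP: "finite S \<Longrightarrow> finite D \<Longrightarrow> degree (NP S D) = card S + 2 * card D"
proof -
  assume fin: "finite S" "finite D"
  have "degree (\<Prod>s\<in>S. [:-s, 1:]) = card S"
    by (subst degree_prod_sum_eq) auto
  moreover have "degree (\<Prod>d\<in>D. [:-d, 1:] ^ 2) = 2 * card D"
    by (subst degree_prod_sum_eq) (auto simp: degree_linear_power)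
  moreover have "(\<Prod>s\<in>S. [:-s, 1:]) \<noteq> 0" "(\<Prod>d\<in>D. [:-d, 1:] ^ 2) \<noteq> 0"
    using fin by (auto simp: prod_zero_iff)
  ultimately show ?thesis by (simp add: NP_def degree_mult_eq)
qed

lemma pderiv_sq_root: "[:-a, 1:] ^ 2 dvd P \<Longrightarrow> poly (pderiv P) a = (0::real)"
proof -
  assume "[:-a, 1:] ^ 2 dvd P"
  then obtain Q where "P = [:-a, 1:] ^ 2 * Q" by (erule dvdE)
  moreover have "[:-a, 1:] ^ 2 = [:-a, 1:] ^ Suc 1" by (simp only: Suc_1)
  ultimately have "P = [:-a, 1:] ^ Suc 1 * Q" by simp
  then have "pderiv P = [:- a, 1:] ^ Suc 1 * pderiv Q + smult (of_nat (Suc 1)) (Q * [:- a, 1:] ^ 1)"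
    by (simp only: lemma_order_pderiv1)
  then show ?thesis by simp
qed

lemma NP_dvd: "finite S \<Longrightarrow> finite D \<Longrightarrow> d \<in> D \<Longrightarrow> [:-d, 1:] ^ 2 dvd NP S D"
  unfolding NP_def by (intro dvd_mult dvd_prodI) auto

lemma pderiv_NP_zero: "finite S \<Longrightarrow> finite D \<Longrightarrow> d \<in> D \<Longrightarrow> poly (pderiv (NP S D)) d = 0"
  by (intro pderiv_sq_root NP_dvd)

lemma herm_add_simple:
  assumes fin: "finite S" "finite D" and z: "z \<notin> S \<union> D"
    and H: "herm F F' S D H" and dH: "degree H \<le> card S + 2 * card D - 1"
  shows "\<exists>H'. herm F F' (insert z S) D H' \<and> degree H' \<le> card S + 2 * card D"
proof -
  define c where "c = (F z - poly H z) / poly (NP S D) z"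
  define H' where "H' = H + smult c (NP S D)"
  have nz: "poly (NP S D) z \<noteq> 0" by (rule poly_NP_nonzero[OF fin z])
  have "herm F F' (insert z S) D H'"
    unfolding herm_def
  proof (intro conjI ballI)
    fix w assume "w \<in> insert z S \<union> D"
    then consider "w = z" | "w \<in> S \<union> D" by auto
    then show "poly H' w = F w"
    proof cases
      case 1 then show ?thesis using nz by (simp add: H'_def c_def)
    next
      case 2 then show ?thesis using H poly_NP_zero[OF fin 2] by (simp add: H'_def herm_def)
    qed
  next
    fix d assume "d \<in> D"
    then show "poly (pderiv H') d = F' d"
      using H pderiv_NP_zero[OF fin \<open>d \<in> D\<close>] by (simp add: H'_def herm_def pderiv_add pderiv_smult)
  qed
  moreover have "degree H' \<le> card S + 2 * card D"
  proof -
    have "degree H' \<le> max (degree H) (degree (smult c (NP S D)))"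
      unfolding H'_def by (rule degree_add_le_max)
    also have "\<dots> \<le> card S + 2 * card D"
      using dH degree_NP[OF fin] degree_smult_le[of c "NP S D"] by simp
    finally show ?thesis .
  qed
  ultimately show ?thesis by blast
qed

lemma herm_add_double:
  assumes fin: "finite S" "finite D" and z: "z \<notin> S \<union> D"
    and H: "herm F F' S D H" and dH: "degree H \<le> card S + 2 * card D - 1"
  shows "\<exists>H'. herm F F' S (insert z D) H' \<and> degree H' \<le> card S + 2 * card D + 1"
proof -
  obtain H1 where H1: "herm F F' (insert z S) D H1" and dH1: "degree H1 \<le> card S + 2 * card D"
    using herm_add_simple[OF fin z H dH] by blast
  have fin': "finite (insert z S)" using fin by simp
  have zS: "z \<notin> S" using z by auto
  have Neq: "NP (insert z S) D = [:-z, 1:] * NP S D"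
    unfolding NP_def prod.insert[OF fin(1) zS] by (simp only: mult.assoc)
  have dN: "poly (pderiv (NP (insert z S) D)) z = poly (NP S D) z"
    unfolding Neq pderiv_mult by (simp add: pderiv_pCons)
  have nz: "poly (NP S D) z \<noteq> 0" by (rule poly_NP_nonzero[OF fin z])
  define c where "c = (F' z - poly (pderiv H1) z) / poly (NP S D) z"
  define H' where "H' = H1 + smult c (NP (insert z S) D)"
  have "herm F F' S (insert z D) H'"
    unfolding herm_def
  proof (intro conjI ballI)
    fix w assume "w \<in> S \<union> insert z D"
    then have w: "w \<in> insert z S \<union> D" by auto
    show "poly H' w = F w"
    proof -
      have "poly H1 w = F w" using H1 w unfolding herm_def by blast
      then show ?thesis using poly_NP_zero[OF fin' fin(2) w] by (simp add: H'_def)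
    qed
  next
    fix d assume "d \<in> insert z D"
    then consider "d = z" | "d \<in> D" by auto
    then show "poly (pderiv H') d = F' d"
    proof cases
      case 1 then show ?thesis using nz dN by (simp add: H'_def c_def pderiv_add pderiv_smult)
    next
      case 2 then show ?thesis
        using H1 pderiv_NP_zero[OF fin' fin(2) 2] by (simp add: H'_def herm_def pderiv_add pderiv_smult)
    qed
  qed
  moreover have "degree H' \<le> card S + 2 * card D + 1"
  proof -
    have "degree H' \<le> max (degree H1) (degree (smult c (NP (insert z S) D)))"
      unfolding H'_def by (rule degree_add_le_max)
    also have "\<dots> \<le> card S + 2 * card D + 1"
      using dH1 degree_NP[OF fin' fin(2)] degree_smult_le[of c "NP (insert z S) D"] fin z by simp
    finally show ?thesis .
  qed
  ultimately show ?thesis by blast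
qed

lemma herm_simple_exists:
  assumes "finite S"
  shows "\<exists>H. herm F F' S {} H \<and> degree H \<le> card S - 1"
  using assms
proof (induction S rule: finite_induct)
  case empty then show ?case by (intro exI[of _ 0]) (simp add: herm_def)
next
  case (insert z S)
  then obtain H where H: "herm F F' S {} H" "degree H \<le> card S + 2 * card ({}::real set) - 1" by auto
  have "z \<notin> S \<union> ({}::real set)" using insert(2) by simp
  from herm_add_simple[OF insert(1) finite.emptyI this H]
  show ?case using insert(1,2) by simp
qed

lemma herm_exists:
  assumes "finite S" "finite D" "S \<inter> D = {}"
  shows "\<exists>H. herm F F' S D H \<and> degree H \<le> card S + 2 * card D - 1"
  using assms(2,3)
proof (induction D rule: finite_induct)
  case empty then show ?case using herm_simple_exists[OF assms(1)] by simp
next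
  case (insert z D)
  then obtain H where H: "herm F F' S D H" "degree H \<le> card S + 2 * card D - 1" by blast
  have "z \<notin> S \<union> D" using insert(2,4) by auto
  from herm_add_double[OF assms(1) insert(1) this H]
  show ?case using insert(1,2) by simp
qed




lemma rolle_count:
  fixes \<psi> \<psi>' :: "real \<Rightarrow> real"
  assumes fin: "finite Z" and sub: "Z \<subseteq> {lo..hi}"
    and zero: "\<forall>z\<in>Z. \<psi> z = 0"
    and cont: "continuous_on {lo..hi} \<psi>"
    and der: "\<forall>x. lo < x \<and> x < hi \<longrightarrow> (\<psi> has_real_derivative \<psi>' x) (at x)"
  shows "\<exists>Z'. finite Z' \<and> card Z \<le> card Z' + 1 \<and> Z' \<subseteq> {lo<..<hi} \<and> Z' \<inter> Z = {} \<and>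
             (\<forall>z\<in>Z'. \<psi>' z = 0) \<and> (\<forall>z\<in>Z'. \<exists>a\<in>Z. z < a)"
  using fin sub zero
proof (induction Z rule: finite_linorder_max_induct)
  case empty then show ?case by (intro exI[of _ "{}"]) auto
next
  case (insert b A)
  show ?case
  proof (cases "A = {}")
    case True then show ?thesis by (intro exI[of _ "{}"]) auto
  next
    case False
    obtain Z' where Z': "finite Z'" "card A \<le> card Z' + 1" "Z' \<subseteq> {lo<..<hi}" "Z' \<inter> A = {}"
      "\<forall>z\<in>Z'. \<psi>' z = 0" "\<forall>z\<in>Z'. \<exists>a\<in>A. z < a"
      using insert by auto
    define a where "a = Max A"
    have aA: "a \<in> A" using False insert(1) by (simp add: a_def)
    have ab: "a < b" using aA insert(2) by auto
    have ale: "\<forall>x\<in>A. x \<le> a" using insert(1) by (simp add: a_def)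
    have lohi: "lo \<le> a" "b \<le> hi" using insert(4) aA by auto
    have "\<exists>c>a. c < b \<and> (\<lambda>h. h * \<psi>' c) = (\<lambda>v. 0)"
    proof (rule Rolle_deriv[where f = \<psi>])
      show "a < b" by (rule ab)
      show "\<psi> a = \<psi> b" using insert(5) aA by auto
      show "continuous_on {a..b} \<psi>" by (rule continuous_on_subset[OF cont]) (use lohi in auto)
      show "(\<psi> has_derivative (\<lambda>h. h * \<psi>' x)) (at x)" if "a < x" "x < b" for x
      proof -
        have "lo < x" "x < hi" using that lohi by auto
        then have "(\<psi> has_derivative (*) (\<psi>' x)) (at x)" using der unfolding has_field_derivative_def by blast
        moreover have "(*) (\<psi>' x) = (\<lambda>h. h * \<psi>' x)" by (auto simp: fun_eq_iff)
        ultimately show ?thesis by simp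
      qed
    qed
    then obtain c where c: "a < c" "c < b" "(\<lambda>h. h * \<psi>' c) = (\<lambda>v. 0)" by blast
    have c0: "\<psi>' c = 0" using fun_cong[OF c(3), of 1] by simp
    have cZ': "c \<notin> Z'" using Z'(6) ale c(1) by force
    show ?thesis
    proof (intro exI[of _ "insert c Z'"] conjI)
      show "finite (insert c Z')" using Z'(1) by simp
      show "card (insert b A) \<le> card (insert c Z') + 1"
        using Z'(1,2) cZ' insert(1,2) by (simp add: card_insert_if)
      show "insert c Z' \<subseteq> {lo<..<hi}" using Z'(3) c lohi by auto
      show "insert c Z' \<inter> insert b A = {}"
        using Z'(4,6) c ale insert(2) by fastforce
      show "\<forall>z\<in>insert c Z'. \<psi>' z = 0" using Z'(5) c0 by auto
      show "\<forall>z\<in>insert c Z'. \<exists>a\<in>insert b A. z < a" using Z'(6) c by auto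
    qed
  qed
qed

lemma rolle_iter:
  fixes \<phi> :: "nat \<Rightarrow> real \<Rightarrow> real"
  assumes der: "\<forall>j<k. \<forall>x. lo < x \<and> x < hi \<longrightarrow> (\<phi> j has_real_derivative \<phi> (Suc j) x) (at x)"
    and fin: "finite Z" and sub: "Z \<subseteq> {lo<..<hi}" and zero: "\<forall>z\<in>Z. \<phi> 0 z = 0"
  shows "\<exists>Z'. finite Z' \<and> card Z \<le> card Z' + k \<and> Z' \<subseteq> {lo<..<hi} \<and> (\<forall>z\<in>Z'. \<phi> k z = 0)"
  using der
proof (induction k)
  case 0 then show ?case using fin sub zero by auto
next
  case (Suc k)
  then obtain Z1 where Z1: "finite Z1" "card Z \<le> card Z1 + k" "Z1 \<subseteq> {lo<..<hi}" "\<forall>z\<in>Z1. \<phi> k z = 0"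
    by auto
  show ?case
  proof (cases "Z1 = {}")
    case True then show ?thesis using Z1 by (intro exI[of _ "{}"]) auto
  next
    case False
    define l where "l = Min Z1"
    define h where "h = Max Z1"
    have lh: "lo < l" "h < hi" "Z1 \<subseteq> {l..h}"
      using Z1 False by (auto simp: l_def h_def)
    have dk: "(\<phi> k has_real_derivative \<phi> (Suc k) x) (at x)" if "l \<le> x" "x \<le> h" for x
      using Suc.prems that lh by auto
    have "continuous_on {l..h} (\<phi> k)"
      using dk by (meson DERIV_isCont atLeastAtMost_iff continuous_at_imp_continuous_on)
    from rolle_count[OF Z1(1) lh(3) Z1(4) this, of "\<phi> (Suc k)"] dk
    obtain Z2 where Z2: "finite Z2" "card Z1 \<le> card Z2 + 1" "Z2 \<subseteq> {l<..<h}" "\<forall>z\<in>Z2. \<phi> (Suc k) z = 0"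
      by auto
    show ?thesis
      using Z2 Z1(2) lh by (intro exI[of _ Z2]) auto
  qed
qed

lemma three_points:
  fixes Z :: "real set"
  assumes fin: "finite Z" and c3: "3 \<le> card Z"
  shows "\<exists>a b c. a \<in> Z \<and> b \<in> Z \<and> c \<in> Z \<and> a < b \<and> b < c"
proof -
  have ne: "Z \<noteq> {}" using c3 by auto
  define a where "a = Min Z"
  have aZ: "a \<in> Z" using fin ne by (simp add: a_def)
  have c2: "card (Z - {a}) \<ge> 2" using c3 aZ fin by (simp add: card_Diff_singleton)
  then have ne2: "Z - {a} \<noteq> {}" by (metis card.empty not_numeral_le_zero)
  define b where "b = Min (Z - {a})"
  have bZ: "b \<in> Z - {a}" unfolding b_def using fin ne2 by (intro Min_in) auto
  have "card (Z - {a} - {b}) \<ge> 1" using c2 bZ fin by (simp add: card_Diff_singleton)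
  then have "Z - {a} - {b} \<noteq> {}" by (metis card.empty not_one_le_zero)
  then obtain c where cZ: "c \<in> Z - {a} - {b}" by blast
  have "a \<le> b" using bZ fin unfolding a_def by simp
  then have ab: "a < b" using bZ by auto
  have "b \<le> c" using cZ fin unfolding b_def by simp
  then have bc: "b < c" using cZ by auto
  show ?thesis using aZ bZ cZ ab bc by blast
qed




lemma coeff_pderiv_iter:
  "coeff ((pderiv ^^ k) p) n = pochhammer (real (Suc n)) k * coeff (p :: real poly) (n + k)"
proof (induction k arbitrary: n)
  case 0 then show ?case by simp
next
  case (Suc k)
  have "coeff ((pderiv ^^ Suc k) p) n = real (Suc n) * coeff ((pderiv ^^ k) p) (Suc n)"
    by (simp add: coeff_pderiv)
  also have "\<dots> = real (Suc n) * (pochhammer (real (Suc (Suc n))) k * coeff p (Suc n + k))"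
    by (simp only: Suc.IH)
  also have "\<dots> = pochhammer (real (Suc n)) (Suc k) * coeff p (n + Suc k)"
    by (simp add: pochhammer_rec add.commute)
  finally show ?case .
qed

lemma poly_deg2:
  fixes Q :: "real poly"
  assumes "degree Q \<le> 2"
  shows "poly Q x = coeff Q 2 * x ^ 2 + coeff Q 1 * x + coeff Q 0"
proof -
  have "Q = [:coeff Q 0, coeff Q 1, coeff Q 2:]"
  proof (rule poly_eqI)
    fix n :: nat
    consider "n = 0" | "n = 1" | "n = 2" | "n > 2" by linarith
    then show "coeff Q n = coeff [:coeff Q 0, coeff Q 1, coeff Q 2:] n"
    proof cases
      case 4
      then have "coeff Q n = 0" using assms by (intro coeff_eq_0) simp
      moreover obtain k where "n = Suc (Suc (Suc k))" using 4 by (metis Suc_le_eq add_Suc_shift add_2_eq_Suc' less_imp_Suc_add nat_le_iff_add numeral_2_eq_2)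
      ultimately show ?thesis by simp
    qed (simp_all add: numeral_2_eq_2)
  qed
  then have "poly Q x = poly [:coeff Q 0, coeff Q 1, coeff Q 2:] x" by simp
  then show ?thesis by (simp add: algebra_simps power2_eq_square)
qed

lemma lead_coeff_NP: "lead_coeff (NP S D) = 1"
  by (simp add: NP_def lead_coeff_mult lead_coeff_prod lead_coeff_power)

lemma quad_sign:
  fixes a b c t q0 q1 q2 :: real
  assumes "b = (1-t)*a + t*c"
  shows "(1-t)*(q2*a^2+q1*a+q0) + t*(q2*c^2+q1*c+q0) - (q2*b^2+q1*b+q0) = q2*(t*(1-t)*(c-a)^2)"
  using assms by (simp only:) (simp add: algebra_simps power2_eq_square)

lemma deriv_iter_has:
  fixes f :: "real \<Rightarrow> real" and t :: real
  assumes "(deriv ^^ j) f differentiable (at t)"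
  shows "((deriv ^^ j) f has_real_derivative (deriv ^^ Suc j) f t) (at t)"
  using assms by (simp add: DERIV_deriv_iff_real_differentiable)

lemma key_error:
  fixes f :: "real \<Rightarrow> real" and m :: nat
  assumes m1: "m \<ge> 1"
    and cont: "continuous_on {0..4} f"
    and diff: "\<forall>j < 2*m - 1. \<forall>t\<in>{0<..<4}. (deriv ^^ j) f differentiable (at t)"
    and conc: "concave_on {0<..<4} ((deriv ^^ (2*m - 1)) f)"
    and finS: "finite S" and finD: "finite D" and disj: "S \<inter> D = {}"
    and Ssub: "S \<subseteq> {0..4}" and Dsub: "D \<subseteq> {0<..<4}"
    and cnt: "card S + 2 * card D = 2*m + 1"
    and H: "herm f (deriv f) S D H" and dH: "degree H \<le> 2*m"
    and r: "r \<in> {0..4}" "r \<notin> S \<union> D"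
  shows "\<exists>K. K \<le> 0 \<and> f r - poly H r = K * poly (NP S D) r \<and>
             (strictly_concave_on {0<..<4} ((deriv ^^ (2*m - 1)) f) \<longrightarrow> K < 0)"
proof -
  define W where "W = NP S D"
  have wnz: "poly W r \<noteq> 0" unfolding W_def by (rule poly_NP_nonzero[OF finS finD r(2)])
  define K where "K = (f r - poly H r) / poly W r"
  define P where "P = H + smult K W"
  define \<psi> where "\<psi> j x = (deriv ^^ j) f x - poly ((pderiv ^^ j) P) x" for j x
  have dW: "degree W = 2*m + 1" unfolding W_def using degree_NP[OF finS finD] cnt by simp
  define Z0 where "Z0 = insert r (S \<union> D)"
  have finZ0: "finite Z0" using finS finD by (simp add: Z0_def)
  have cZ0: "card Z0 = card S + card D + 1"
    using finS finD disj r(2) by (simp add: Z0_def card_Un_disjoint)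
  have z0: "\<forall>z\<in>Z0. \<psi> 0 z = 0"
  proof
    fix z assume "z \<in> Z0"
    then consider "z = r" | "z \<in> S \<union> D" by (auto simp: Z0_def)
    then show "\<psi> 0 z = 0"
    proof cases
      case 1 then show ?thesis using wnz by (simp add: \<psi>_def P_def K_def)
    next
      case 2
      have "poly H z = f z" using H 2 by (simp add: herm_def)
      moreover have "poly W z = 0" unfolding W_def by (rule poly_NP_zero[OF finS finD 2])
      ultimately show ?thesis by (simp add: \<psi>_def P_def)
    qed
  qed
  have Z0sub: "Z0 \<subseteq> {0..4}" using Ssub Dsub r(1) by (auto simp: Z0_def)
  have d0: "\<forall>j<2*m - 1. \<forall>x. 0 < x \<and> x < 4 \<longrightarrow> (\<psi> j has_real_derivative \<psi> (Suc j) x) (at x)"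
  proof (intro allI impI)
    fix j :: nat and x :: real assume j: "j < 2*m - 1" and x: "0 < x \<and> x < 4"
    have "((deriv ^^ j) f has_real_derivative (deriv ^^ Suc j) f x) (at x)"
      using diff j x by (intro deriv_iter_has) auto
    moreover have "((\<lambda>x. poly ((pderiv ^^ j) P) x) has_real_derivative poly ((pderiv ^^ Suc j) P) x) (at x)"
      using poly_DERIV[of "(pderiv ^^ j) P" x] by simp
    ultimately show "(\<psi> j has_real_derivative \<psi> (Suc j) x) (at x)"
      unfolding \<psi>_def by (intro derivative_intros) auto
  qed
  have cont0: "continuous_on {0..4} (\<psi> 0)"
    unfolding \<psi>_def by (simp, intro continuous_intros cont)
  obtain Z' where Z': "finite Z'" "card Z0 \<le> card Z' + 1" "Z' \<subseteq> {0<..<4}" "Z' \<inter> Z0 = {}"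
      "\<forall>z\<in>Z'. \<psi> 1 z = 0"
    using rolle_count[OF finZ0 Z0sub z0 cont0, of "\<psi> 1"] d0 m1 by auto
  have zD: "\<forall>z\<in>D. \<psi> 1 z = 0"
  proof
    fix d assume d: "d \<in> D"
    have "poly (pderiv H) d = deriv f d" using H d by (simp add: herm_def)
    moreover have "poly (pderiv W) d = 0" unfolding W_def by (rule pderiv_NP_zero[OF finS finD d])
    ultimately show "\<psi> 1 d = 0"
      by (simp add: \<psi>_def P_def pderiv_add pderiv_smult)
  qed
  define Z1 where "Z1 = Z' \<union> D"
  have finZ1: "finite Z1" using Z'(1) finD by (simp add: Z1_def)
  have cZ1: "2*m + 1 \<le> card Z1"
  proof -
    have "Z' \<inter> D = {}" using Z'(4) by (auto simp: Z0_def)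
    then have "card Z1 = card Z' + card D" using Z'(1) finD by (simp add: Z1_def card_Un_disjoint)
    then show ?thesis using Z'(2) cZ0 cnt by linarith
  qed
  have Z1sub: "Z1 \<subseteq> {0<..<4}" using Z'(3) Dsub by (auto simp: Z1_def)
  have z1: "\<forall>z\<in>Z1. \<psi> 1 z = 0" using Z'(5) zD by (auto simp: Z1_def)
  have der1: "\<forall>j<2*m - 2. \<forall>x. 0 < x \<and> x < 4 \<longrightarrow> ((\<lambda>j. \<psi> (Suc j)) j has_real_derivative (\<lambda>j. \<psi> (Suc j)) (Suc j) x) (at x)"
    using d0 by auto
  obtain Z2 where Z2: "finite Z2" "card Z1 \<le> card Z2 + (2*m - 2)" "Z2 \<subseteq> {0<..<4}"
      "\<forall>z\<in>Z2. \<psi> (Suc (2*m - 2)) z = 0"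
    using rolle_iter[OF der1 finZ1 Z1sub] z1 by auto
  have e: "Suc (2*m - 2) = 2*m - 1" using m1 by simp
  have "3 \<le> card Z2" using Z2(2) cZ1 m1 by linarith
  then obtain a b c where abc: "a \<in> Z2" "b \<in> Z2" "c \<in> Z2" "a < b" "b < c"
    using three_points[OF Z2(1)] by blast
  define F where "F = (deriv ^^ (2*m - 1)) f"
  define Q where "Q = (pderiv ^^ (2*m - 1)) P"
  have FQ: "F x = poly Q x" if "x \<in> Z2" for x
    using Z2(4) that e by (simp add: \<psi>_def F_def Q_def)
  have cP: "coeff P i = 0" if "i > 2*m + 1" for i
    using that dH dW by (simp add: P_def coeff_eq_0)
  have cPtop: "coeff P (2*m + 1) = K"
  proof -
    have "coeff H (2*m + 1) = 0" using dH by (simp add: coeff_eq_0)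
    moreover have "coeff W (2*m + 1) = 1" using lead_coeff_NP[of S D] dW by (simp add: W_def)
    ultimately show ?thesis by (simp add: P_def)
  qed
  have cQ: "coeff Q n = pochhammer (real (Suc n)) (2*m - 1) * coeff P (n + (2*m - 1))" for n
    unfolding Q_def by (rule coeff_pderiv_iter)
  have dQ: "degree Q \<le> 2"
  proof (rule degree_le, intro allI impI)
    fix i :: nat assume "2 < i"
    then have "coeff P (i + (2*m - 1)) = 0" using m1 by (intro cP) linarith
    then show "coeff Q i = 0" by (simp add: cQ)
  qed
  define q2 where "q2 = coeff Q 2"
  have q2K: "q2 = pochhammer 3 (2*m - 1) * K"
  proof -
    have "2 + (2*m - 1) = 2*m + 1" using m1 by simp
    then show ?thesis unfolding q2_def cQ using cPtop by (simp add: numeral_3_eq_3)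
  qed
  have poch: "pochhammer (3::real) (2*m - 1) > 0" by (rule pochhammer_pos) simp
  define t where "t = (b - a) / (c - a)"
  have t: "0 < t" "t < 1" using abc by (auto simp: t_def field_simps)
  have tc: "t * (c - a) = b - a" using abc by (simp add: t_def)
  have "(1 - t) * a + t * c = a + t * (c - a)" by (simp add: algebra_simps)
  then have bt: "b = (1 - t) * a + t * c" using tc by simp
  have quad: "(1-t) * poly Q a + t * poly Q c - poly Q b = q2 * (t * (1-t) * (c-a)^2)"
    unfolding poly_deg2[OF dQ] q2_def by (rule quad_sign[OF bt])
  have pos: "t * (1-t) * (c-a)^2 > 0" using t abc by simp
  have ab4: "a \<in> {0<..<4}" "c \<in> {0<..<4}" using abc Z2(3) by auto
  have cv: "\<forall>x\<in>{0<..<4}. \<forall>y\<in>{0<..<4}. \<forall>u\<ge>0. \<forall>v\<ge>0. u + v = 1 \<longrightarrow>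
      - F (u *\<^sub>R x + v *\<^sub>R y) \<le> u * - F x + v * - F y"
    using conc unfolding concave_on_def convex_on_def F_def by blast
  have "- F ((1 - t) *\<^sub>R a + t *\<^sub>R c) \<le> (1 - t) * - F a + t * - F c"
    using cv[rule_format, of a c "1 - t" t] ab4 t by simp
  then have "F ((1 - t) *\<^sub>R a + t *\<^sub>R c) \<ge> (1 - t) * F a + t * F c" by simp
  then have "F b \<ge> (1 - t) * F a + t * F c" using bt by simp
  then have "(1-t) * poly Q a + t * poly Q c - poly Q b \<le> 0"
    using FQ[OF abc(1)] FQ[OF abc(2)] FQ[OF abc(3)] by simp
  then have "q2 \<le> 0" using quad pos by (smt (verit) mult_pos_pos)
  then have K0: "K \<le> 0" using q2K poch by (simp add: mult_le_0_iff)
  have strict: "K < 0" if sc: "strictly_concave_on {0<..<4} ((deriv ^^ (2*m - 1)) f)"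
  proof -
    have "(1 - t) * F a + t * F c < F ((1 - t) * a + t * c)"
      using sc ab4 t abc unfolding strictly_concave_on_def F_def by auto
    then have "(1 - t) * F a + t * F c < F b" using bt by simp
    then have "(1-t) * poly Q a + t * poly Q c - poly Q b < 0"
      using FQ[OF abc(1)] FQ[OF abc(2)] FQ[OF abc(3)] by simp
    then have "q2 < 0" using quad pos by (smt (verit) mult_nonneg_nonneg)
    then show "K < 0" using q2K poch by (simp add: mult_less_0_iff)
  qed
  have "f r - poly H r = K * poly (NP S D) r" using wnz by (simp add: K_def W_def)
  then show ?thesis using K0 strict by blast
qed




lemma norm_diff_sq_unit:
  fixes x y :: "real^'n::finite"
  assumes "norm x = 1" "norm y = 1"
  shows "(norm (x - y))^2 = 2 - 2 * (x \<bullet> y)"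
proof -
  have "(norm (x - y))^2 = x \<bullet> x - 2 * (x \<bullet> y) + y \<bullet> y"
    by (simp add: power2_norm_eq_inner inner_diff_left inner_diff_right inner_commute)
  moreover have "x \<bullet> x = 1" "y \<bullet> y = 1" using assms by (simp_all add: power2_norm_eq_inner[symmetric])
  ultimately show ?thesis by simp
qed

lemma main_from_nodes:
  fixes f :: "real \<Rightarrow> real" and m :: nat and \<omega> :: "(real^'n::finite) set"
  assumes m1: "m \<ge> 1"
    and cont: "continuous_on {0..4} f"
    and diff: "\<forall>j < 2*m - 1. \<forall>t\<in>{0<..<4}. (deriv ^^ j) f differentiable (at t)"
    and conc: "concave_on {0<..<4} ((deriv ^^ (2*m - 1)) f)"
    and des: "spherical_design (2*m) \<omega>"
    and y: "norm y = 1" and xj: "xj \<in> \<omega>"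
    and Rmem: "\<forall>x\<in>\<omega>. \<forall>z\<in>\<omega>. x \<noteq> z \<longrightarrow> (norm (x - z))^2 \<in> R"
    and Rsub: "R \<subseteq> {0<..4}" and finR: "finite R" and cR: "card R = m"
    and finS: "finite S" and finD: "finite D" and disj: "S \<inter> D = {}"
    and Ssub: "S \<subseteq> {0..4}" and Dsub: "D \<subseteq> {0<..<4}"
    and cnt: "card S + 2 * card D = 2*m + 1"
    and S0: "0 \<in> S" and RSD: "R \<subseteq> S \<union> D"
    and P3: "\<forall>x\<in>\<omega>. (norm (y - x))^2 \<notin> S \<union> D \<longrightarrow> poly (NP S D) ((norm (y - x))^2) > 0"
    and P4: "\<forall>x\<in>\<omega>. (norm (y - x))^2 \<in> S \<union> D \<longrightarrow> (norm (y - x))^2 \<in> insert 0 R"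
  shows "potential f \<omega> y \<le> potential f \<omega> xj \<and>
         (strictly_concave_on {0<..<4} ((deriv ^^ (2*m - 1)) f) \<and> y \<notin> \<omega> \<longrightarrow>
            potential f \<omega> y < potential f \<omega> xj)"
proof -
  have finw: "finite \<omega>" and sph: "\<omega> \<subseteq> sphere 0 1" using des by (auto simp: spherical_design_def)
  have nx: "norm x = 1" if "x \<in> \<omega>" for x using sph that by auto
  have nxj: "norm xj = 1" using nx xj by simp
  obtain H where H: "herm f (deriv f) S D H" and dH0: "degree H \<le> card S + 2 * card D - 1"
    using herm_exists[OF finS finD disj] by blast
  have dH: "degree H \<le> 2*m" using dH0 cnt by simp
  have u4: "(norm (y - x))^2 \<in> {0..4}" if "x \<in> \<omega>" for x
  proof -
    have "norm (y - x) \<le> 2" using norm_triangle_ineq4[of y x] y nx[OF that] by simp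
    then have "(norm (y - x))^2 \<le> 2^2" by (intro power_mono) auto
    then show ?thesis by simp
  qed
  have pt: "f ((norm (y - x))^2) \<le> poly H ((norm (y - x))^2) \<and>
            (strictly_concave_on {0<..<4} ((deriv ^^ (2*m - 1)) f) \<and> (norm (y - x))^2 \<notin> S \<union> D \<longrightarrow>
              f ((norm (y - x))^2) < poly H ((norm (y - x))^2))" if x: "x \<in> \<omega>" for x
  proof (cases "(norm (y - x))^2 \<in> S \<union> D")
    case True
    then show ?thesis using H by (simp add: herm_def)
  next
    case False
    obtain K where K: "K \<le> 0" "f ((norm (y - x))^2) - poly H ((norm (y - x))^2) = K * poly (NP S D) ((norm (y - x))^2)"
      "strictly_concave_on {0<..<4} ((deriv ^^ (2*m - 1)) f) \<longrightarrow> K < 0"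
      using key_error[OF m1 cont diff conc finS finD disj Ssub Dsub cnt H dH u4[OF x] False] by blast
    have W: "poly (NP S D) ((norm (y - x))^2) > 0" using P3 x False by blast
    have "K * poly (NP S D) ((norm (y - x))^2) \<le> 0" using K(1) W by (simp add: mult_nonpos_nonneg)
    moreover have "strictly_concave_on {0<..<4} ((deriv ^^ (2*m - 1)) f) \<longrightarrow> K * poly (NP S D) ((norm (y - x))^2) < 0"
      using K(3) W by (simp add: mult_neg_pos)
    ultimately show ?thesis using K(2) False by auto
  qed
  have sumH: "(\<Sum>x\<in>\<omega>. poly H ((norm (y - x))^2)) = (\<Sum>x\<in>\<omega>. poly H ((norm (xj - x))^2))"
  proof -
    have "(\<Sum>x\<in>\<omega>. poly H ((norm (y - x))^2)) = (\<Sum>x\<in>\<omega>. poly H (2 - 2 * (y \<bullet> x)))"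
      by (rule sum.cong) (simp_all add: norm_diff_sq_unit[OF y nx])
    also have "\<dots> = (\<Sum>x\<in>\<omega>. poly H (2 - 2 * (xj \<bullet> x)))"
      by (rule design_zonal[OF des dH y nxj])
    also have "\<dots> = (\<Sum>x\<in>\<omega>. poly H ((norm (xj - x))^2))"
      by (rule sum.cong) (simp_all add: norm_diff_sq_unit[OF nxj nx])
    finally show ?thesis .
  qed
  have sumF: "(\<Sum>x\<in>\<omega>. poly H ((norm (xj - x))^2)) = potential f \<omega> xj"
    unfolding potential_def
  proof (rule sum.cong)
    fix x assume x: "x \<in> \<omega>"
    have "(norm (xj - x))^2 \<in> S \<union> D"
    proof (cases "x = xj")
      case True then show ?thesis using S0 by simp
    next
      case False
      then have "xj \<noteq> x" by simp
      then have "(norm (xj - x))^2 \<in> R" using Rmem xj x by blast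
      then show ?thesis using RSD by blast
    qed
    then show "poly H ((norm (xj - x))^2) = f ((norm (xj - x))^2)" using H by (simp add: herm_def)
  qed simp
  have le: "potential f \<omega> y \<le> (\<Sum>x\<in>\<omega>. poly H ((norm (y - x))^2))"
    unfolding potential_def by (rule sum_mono) (use pt in blast)
  have strict: "potential f \<omega> y < potential f \<omega> xj"
    if sc: "strictly_concave_on {0<..<4} ((deriv ^^ (2*m - 1)) f)" and yw: "y \<notin> \<omega>"
  proof -
    have ex: "\<exists>x\<in>\<omega>. (norm (y - x))^2 \<notin> S \<union> D"
    proof (rule ccontr)
      assume "\<not> ?thesis"
      then have allR: "\<forall>x\<in>\<omega>. (norm (y - x))^2 \<in> R"
      proof (intro ballI)
        fix x assume "\<not> (\<exists>x\<in>\<omega>. (norm (y - x))^2 \<notin> S \<union> D)" "x \<in> \<omega>"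
        then have "(norm (y - x))^2 \<in> insert 0 R" using P4 by blast
        moreover have "(norm (y - x))^2 \<noteq> 0" using yw \<open>x \<in> \<omega>\<close> by auto
        ultimately show "(norm (y - x))^2 \<in> R" by simp
      qed
      define q where "q = NP {} R"
      have dq: "degree q = 2*m" using degree_NP[of "{}" R] finR cR by (simp add: q_def)
      have q0: "poly q ((norm (y - x))^2) = 0" if "x \<in> \<omega>" for x
        unfolding q_def using allR that finR by (intro poly_NP_zero) auto
      have qnn: "poly q u \<ge> 0" for u
        using finR by (simp add: q_def poly_NP prod_nonneg)
      have "(\<Sum>x\<in>\<omega>. poly q ((norm (y - x))^2)) = (\<Sum>x\<in>\<omega>. poly q ((norm (xj - x))^2))"
      proof -
        have "(\<Sum>x\<in>\<omega>. poly q ((norm (y - x))^2)) = (\<Sum>x\<in>\<omega>. poly q (2 - 2 * (y \<bullet> x)))"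
          by (rule sum.cong) (simp_all add: norm_diff_sq_unit[OF y nx])
        also have "\<dots> = (\<Sum>x\<in>\<omega>. poly q (2 - 2 * (xj \<bullet> x)))"
          by (rule design_zonal[OF des _ y nxj]) (simp add: dq)
        also have "\<dots> = (\<Sum>x\<in>\<omega>. poly q ((norm (xj - x))^2))"
          by (rule sum.cong) (simp_all add: norm_diff_sq_unit[OF nxj nx])
        finally show ?thesis .
      qed
      moreover have "(\<Sum>x\<in>\<omega>. poly q ((norm (y - x))^2)) = 0" using q0 by simp
      moreover have "(\<Sum>x\<in>\<omega>. poly q ((norm (xj - x))^2)) > 0"
      proof -
        have "poly q 0 > 0"
        proof -
          have "poly q 0 = (\<Prod>d\<in>R. (0 - d)^2)" using finR by (simp add: q_def poly_NP)
          moreover have "(\<Prod>d\<in>R. (0 - d)^2) > 0" using Rsub by (intro prod_pos) auto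
          ultimately show ?thesis by simp
        qed
        then have "poly q ((norm (xj - xj))^2) > 0" by simp
        moreover have "poly q ((norm (xj - xj))^2) \<le> (\<Sum>x\<in>\<omega>. poly q ((norm (xj - x))^2))"
          by (rule member_le_sum[OF xj]) (use qnn finw in auto)
        ultimately show ?thesis by linarith
      qed
      ultimately show False by simp
    qed
    have "potential f \<omega> y < (\<Sum>x\<in>\<omega>. poly H ((norm (y - x))^2))"
      unfolding potential_def
      by (rule sum_strict_mono_ex1[OF finw]) (use pt ex sc in blast)+
    then show ?thesis using sumH sumF by simp
  qed
  show ?thesis using le sumH sumF strict by auto
qed




lemma unit_dist_bound:
  fixes x y :: "real^'n::finite"
  assumes "norm x = 1" "norm y = 1"
  shows "(norm (y - x))^2 \<in> {0..4}"
proof -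
  have "norm (y - x) \<le> 2" using norm_triangle_ineq4[of y x] assms by simp
  then have "(norm (y - x))^2 \<le> 2^2" by (intro power_mono) auto
  then show ?thesis by simp
qed

theorem theorem2p3:
  fixes f :: "real \<Rightarrow> real" and m :: nat and \<omega> :: "(real^'n) set"
  assumes "m \<ge> 1" and "CARD('n) \<ge> 2"
    and "continuous_on {0..4} f"
    and "\<forall>j < 2*m - 1. \<forall>t\<in>{0<..<4}. (deriv ^^ j) f differentiable (at t)"
    and "concave_on {0<..<4} ((deriv ^^ (2*m - 1)) f)"
    and "strongly_sharp m \<omega>"
  shows "(\<forall>x\<in>\<omega>. \<forall>y\<in>sphere 0 1. potential f \<omega> y \<le> potential f \<omega> x) \<and>
         (strictly_concave_on {0<..<4} ((deriv ^^ (2*m - 1)) f) \<longrightarrow>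
           (\<forall>y\<in>sphere 0 1. (\<forall>z\<in>sphere 0 1. potential f \<omega> z \<le> potential f \<omega> y) \<longrightarrow> y \<in> \<omega>))"
proof -
  note m1 = assms(1) and cont = assms(3) and diff = assms(4) and conc = assms(5)
  have des: "spherical_design (2*m) \<omega>" and cT: "card {x \<bullet> y | x y. x \<in> \<omega> \<and> y \<in> \<omega> \<and> x \<noteq> y} = m"
    using assms(6) by (auto simp: strongly_sharp_def sharp_def)
  have finw: "finite \<omega>" and new: "\<omega> \<noteq> {}" and sph: "\<omega> \<subseteq> sphere 0 1"
    using des by (auto simp: spherical_design_def)
  have nx: "norm x = 1" if "x \<in> \<omega>" for x using sph that by auto
  define T where "T = {x \<bullet> y | x y. x \<in> \<omega> \<and> y \<in> \<omega> \<and> x \<noteq> y}"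
  have cT': "card T = m" using cT by (simp add: T_def)
  have finT: "finite T" using cT' m1 by (metis card.infinite not_one_le_zero)
  define R where "R = (\<lambda>t. 2 - 2 * t) ` T"
  have finR: "finite R" using finT by (simp add: R_def)
  have cR: "card R = m" unfolding R_def using cT' by (subst card_image) (auto simp: inj_on_def)
  have Rmem: "\<forall>x\<in>\<omega>. \<forall>z\<in>\<omega>. x \<noteq> z \<longrightarrow> (norm (x - z))^2 \<in> R"
  proof (intro ballI impI)
    fix x z assume "x \<in> \<omega>" "z \<in> \<omega>" "x \<noteq> z"
    then have "x \<bullet> z \<in> T" by (auto simp: T_def)
    then show "(norm (x - z))^2 \<in> R" using norm_diff_sq_unit[OF nx nx] \<open>x \<in> \<omega>\<close> \<open>z \<in> \<omega>\<close>
      by (auto simp: R_def)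
  qed
  have Rsub: "R \<subseteq> {0<..4}"
  proof
    fix r assume "r \<in> R"
    then obtain x z where xz: "x \<in> \<omega>" "z \<in> \<omega>" "x \<noteq> z" "r = 2 - 2 * (x \<bullet> z)"
      by (auto simp: R_def T_def)
    have r: "r = (norm (x - z))^2" using norm_diff_sq_unit[OF nx[OF xz(1)] nx[OF xz(2)]] xz by simp
    have "r > 0" using r xz(3) by simp
    moreover have "r \<le> 4" using unit_dist_bound[OF nx[OF xz(2)] nx[OF xz(1)]] r by simp
    ultimately show "r \<in> {0<..4}" by simp
  qed
  have R0: "0 \<notin> R" using Rsub by auto
  have main: "potential f \<omega> y \<le> potential f \<omega> xj \<and>
         (strictly_concave_on {0<..<4} ((deriv ^^ (2*m - 1)) f) \<and> y \<notin> \<omega> \<longrightarrow>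
            potential f \<omega> y < potential f \<omega> xj)" if y: "norm y = 1" and xj: "xj \<in> \<omega>" for y xj
  proof -
    have u4: "(norm (y - x))^2 \<in> {0..4}" if "x \<in> \<omega>" for x
      using unit_dist_bound[OF nx[OF that] y] .
    show ?thesis
    proof (cases "4 \<in> R")
      case False
      show ?thesis
      proof (rule main_from_nodes[OF m1 cont diff conc des y xj Rmem Rsub finR cR,
            where S = "{0}" and D = R])
        show "{0} \<inter> R = {}" using R0 by simp
        show "R \<subseteq> {0<..<4}"
        proof
          fix r assume "r \<in> R"
          then have "0 < r" "r \<le> 4" "r \<noteq> 4" using Rsub False by auto
          then show "r \<in> {0<..<4}" by simp
        qed
        show "card {0::real} + 2 * card R = 2 * m + 1" using cR by simp
        show "\<forall>x\<in>\<omega>. (norm (y - x))\<^sup>2 \<notin> {0} \<union> R \<longrightarrow> 0 < poly (NP {0} R) ((norm (y - x))\<^sup>2)"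
        proof (intro ballI impI)
          fix x assume x: "x \<in> \<omega>" and nin: "(norm (y - x))\<^sup>2 \<notin> {0} \<union> R"
          define u where "u = (norm (y - x))\<^sup>2"
          have "u > 0" using u4[OF x] nin by (auto simp: u_def)
          moreover have "(\<Prod>d\<in>R. (u - d)^2) > 0" using nin by (intro prod_pos) (auto simp: u_def)
          ultimately show "0 < poly (NP {0} R) ((norm (y - x))\<^sup>2)"
            using finR by (simp add: poly_NP u_def[symmetric])
        qed
      qed (use finR in auto)
    next
      case True
      define U where "U = (\<lambda>x. (norm (y - x))^2) ` \<omega>"
      have finU: "finite U" using finw by (simp add: U_def)
      define M where "M = Max (insert 0 ((R \<union> U) - {4}))"
      have finM: "finite (insert 0 ((R \<union> U) - {4}))" using finR finU by simp
      have M0: "0 \<le> M" unfolding M_def using finM by simp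
      have Mge: "v \<le> M" if "v \<in> (R \<union> U) - {4}" for v unfolding M_def using finM that by simp
      have M4: "M < 4"
      proof -
        have "M \<in> insert 0 ((R \<union> U) - {4})" unfolding M_def using finM by (intro Max_in) auto
        moreover have "R \<union> U \<subseteq> {0..4}" using Rsub u4 by (auto simp: U_def)
        ultimately show ?thesis by auto
      qed
      define s where "s = (M + 4) / 2"
      have s: "M < s" "s < 4" "0 < s" using M0 M4 by (auto simp: s_def)
      have sR: "s \<notin> R" using Mge s by force
      have cS: "card {0, s, 4::real} = 3" using s by simp
      have cD: "card (R - {4}) = m - 1" using True finR cR by (simp add: card_Diff_singleton)
      show ?thesis
      proof (rule main_from_nodes[OF m1 cont diff conc des y xj Rmem Rsub finR cR,
            where S = "{0, s, 4}" and D = "R - {4}"])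
        show "{0, s, 4} \<inter> (R - {4}) = {}" using R0 sR by auto
        show "{0, s, 4} \<subseteq> {0..4::real}" using s by auto
        show "R - {4} \<subseteq> {0<..<4}"
        proof
          fix r assume "r \<in> R - {4}"
          then have "0 < r" "r \<le> 4" "r \<noteq> 4" using Rsub by auto
          then show "r \<in> {0<..<4}" by simp
        qed
        show "card {0, s, 4::real} + 2 * card (R - {4}) = 2 * m + 1" using cS cD m1 by simp
        show "\<forall>x\<in>\<omega>. (norm (y - x))\<^sup>2 \<notin> {0, s, 4} \<union> (R - {4}) \<longrightarrow>
                0 < poly (NP {0, s, 4} (R - {4})) ((norm (y - x))\<^sup>2)"
        proof (intro ballI impI)
          fix x assume x: "x \<in> \<omega>" and nin: "(norm (y - x))\<^sup>2 \<notin> {0, s, 4} \<union> (R - {4})"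
          define u where "u = (norm (y - x))\<^sup>2"
          have uU: "u \<in> U" using x by (simp add: U_def u_def)
          have u: "0 < u" "u < 4" using u4[OF x] nin by (auto simp: u_def)
          then have "u \<le> M" using Mge uU by simp
          then have us: "u < s" using s by simp
          have "(\<Prod>z\<in>{0, s, 4}. u - z) = u * ((u - s) * (u - 4))" using s by simp
          moreover have "u * ((u - s) * (u - 4)) > 0" using u us by (simp add: mult_pos_pos mult_neg_neg)
          moreover have "(\<Prod>d\<in>R - {4}. (u - d)^2) > 0" using nin by (intro prod_pos) (auto simp: u_def)
          ultimately show "0 < poly (NP {0, s, 4} (R - {4})) ((norm (y - x))\<^sup>2)"
            using finR by (simp add: poly_NP u_def[symmetric])
        qed
        show "\<forall>x\<in>\<omega>. (norm (y - x))\<^sup>2 \<in> {0, s, 4} \<union> (R - {4}) \<longrightarrow> (norm (y - x))\<^sup>2 \<in> insert 0 R"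
        proof (intro ballI impI)
          fix x assume x: "x \<in> \<omega>" and inn: "(norm (y - x))\<^sup>2 \<in> {0, s, 4} \<union> (R - {4})"
          define u where "u = (norm (y - x))\<^sup>2"
          have uU: "u \<in> U" using x by (simp add: U_def u_def)
          have "u \<noteq> s"
          proof
            assume "u = s"
            then have "u \<in> (R \<union> U) - {4}" using uU s by auto
            then show False using Mge s \<open>u = s\<close> by force
          qed
          then show "(norm (y - x))\<^sup>2 \<in> insert 0 R" using inn True by (auto simp: u_def)
        qed
      qed (use finR True in auto)
    qed
  qed
  show ?thesis
  proof (intro conjI impI ballI)
    fix x y :: "real^'n" assume "x \<in> \<omega>" "y \<in> sphere 0 1"
    then show "potential f \<omega> y \<le> potential f \<omega> x" using main by simp
  next
    fix y :: "real^'n"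
    assume sc: "strictly_concave_on {0<..<4} ((deriv ^^ (2*m - 1)) f)"
      and ysph: "y \<in> sphere 0 1" and mx: "\<forall>z\<in>sphere 0 1. potential f \<omega> z \<le> potential f \<omega> y"
    obtain xj where xj: "xj \<in> \<omega>" using new by blast
    have "potential f \<omega> xj \<le> potential f \<omega> y" using mx xj sph by auto
    show "y \<in> \<omega>"
    proof (rule ccontr)
      assume "y \<notin> \<omega>"
      then have "potential f \<omega> y < potential f \<omega> xj" using main[of y xj] ysph xj sc by simp
      then show False using \<open>potential f \<omega> xj \<le> potential f \<omega> y\<close> by simp
    qed
  qed
qed


end
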